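(* Let $d$ be a positive integer, $d < q \le \infty$, and let $p = q/(q-d)$ (with $p=1$ if $q=\infty$). Let $\mathbf{a} = (a_j)_{j=1}^\infty\in\ell^p$ and $M>0$. Let $X_{q,M} = \{\mathbf{x}\in\ell^q : \|\mathbf{x}\|_q\le M\}$, viewed as a subspace of $\Omega$, where $\Omega = \prod_{j=1}^\infty[-M,M]$ in the real case and $\Omega=\prod_{j=1}^\infty\{x\in\mathbb{C}:|x|\le M\}$ in the complex case, with the product topology. Then the function $f_d$ on $X_{q,M}$ defined by \[ f_d(\mathbf{x}) = (\mathbf{a},\mathbf{x}^d) = \sum_{j=1}^\infty a_j x_j^d \] is continuous with respect to the subspace topology on $X_{q,M}$ induced by the product topology on $\Omega$.
   Context: $\ell^p$ ($1\le p<\infty$) denotes sequences with $\|\mathbf{a}\|_p=(\sum_j|a_j|^p)^{1/p}<\infty$, and $\ell^\infty$ bounded sequences with the sup norm. Sequences and coefficients are real in the real case and complex in the complex case. The series defining $f_d$ converges absolutely by Hölder's inequality since $\mathbf{x}^d=(x_j^d)\in\ell^{q/d}$ and $(p,q/d)$ is a conjugate pair. *)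

theory Defs
  imports "HOL-Analysis.Analysis"
begin

text \<open>Membership in the sequence space l^q, for 1 \<le> q \<le> \<infinity> (q :: ereal).
  Sequences are indexed by nat (index 0 plays the role of index 1).\<close>
definition in_lq :: "ereal \<Rightarrow> (nat \<Rightarrow> 'a::real_normed_vector) \<Rightarrow> bool" where
  "in_lq q x = (if q = \<infinity> then bounded (range x)
                else summable (\<lambda>j. norm (x j) powr real_of_ereal q))"

definition lq_norm :: "ereal \<Rightarrow> (nat \<Rightarrow> 'a::real_normed_vector) \<Rightarrow> real" where
  "lq_norm q x = (if q = \<infinity> then (SUP j. norm (x j))
                  else (\<Sum>j. norm (x j) powr real_of_ereal q) powr (1 / real_of_ereal q))"

definition conj_exp :: "nat \<Rightarrow> ereal \<Rightarrow> ereal" where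
  "conj_exp d q = (if q = \<infinity> then 1
                   else ereal (real_of_ereal q / (real_of_ereal q - real d)))"

definition Xball :: "ereal \<Rightarrow> real \<Rightarrow> (nat \<Rightarrow> 'a::real_normed_vector) set" where
  "Xball q M = {x. in_lq q x \<and> lq_norm q x \<le> M}"

definition Omega :: "real \<Rightarrow> (nat \<Rightarrow> 'a::real_normed_vector) set" where
  "Omega M = {x. \<forall>j. norm (x j) \<le> M}"

end

theory Submission
  imports Defs
begin

lemma young_aux:
  fixes \<alpha> \<beta> T Q :: real and d :: nat
  assumes "\<alpha> \<ge> 0" "\<beta> \<ge> 0" "T > 0" "Q > real d" "d > 0"
  shows "\<alpha> * \<beta> ^ d \<le> T * \<alpha> powr (Q / (Q - d)) + T powr (- ((Q - d) / d)) * \<beta> powr Q"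
proof (cases "\<beta> = 0 \<or> \<alpha> = 0")
  case True
  then show ?thesis using assms by (auto simp: power_0_left)
next
  case False
  hence a: "\<alpha> > 0" and b: "\<beta> > 0" using assms by auto
  define e where "e = (Q - d) / d"
  have e: "e > 0" using assms by (simp add: e_def)
  have bd: "\<beta> ^ d = \<beta> powr d" using b by (simp add: powr_realpow)
  have p: "Q / (Q - d) = 1 + 1 / e" using assms by (simp add: e_def field_simps)
  define c where "c = T powr (- e)"
  have c: "c > 0" using assms by (simp add: c_def)
  have t1: "T * \<alpha> powr (Q / (Q - d)) \<ge> 0" "c * \<beta> powr Q \<ge> 0" using assms c by auto
  show ?thesis
  proof (cases "\<alpha> \<le> c * \<beta> powr (Q - d)")
    case True
    have "\<alpha> * \<beta> ^ d \<le> c * \<beta> powr (Q - d) * \<beta> powr d"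
      using True bd b by (simp add: mult_right_mono)
    also have "\<dots> = c * \<beta> powr Q" by (simp add: mult.assoc flip: powr_add)
    finally show ?thesis using t1 unfolding c_def e_def by linarith
  next
    case False
    hence lt: "c * \<beta> powr (Q - d) < \<alpha>" by simp
    have "(c * \<beta> powr (Q - d)) powr (1 / e) < \<alpha> powr (1/e)"
      using lt c b e by (intro powr_less_mono2) auto
    moreover have "(c * \<beta> powr (Q - d)) powr (1 / e) = T powr (-1) * \<beta> powr d"
    proof -
      have ex: "(Q * real d - real d * real d) / (Q - real d) = real d"
      proof -
        have "Q * real d - real d * real d = real d * (Q - real d)" by algebra
        thus ?thesis using assms by simp
      qed
      show ?thesis
      using c b e assms unfolding c_def
      by (simp add: powr_mult powr_powr e_def field_simps ex)
    qed
    ultimately have "\<beta> powr d < T * \<alpha> powr (1/e)" using assms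
      by (simp add: powr_minus field_simps)
    hence "\<alpha> * \<beta> ^ d \<le> \<alpha> * (T * \<alpha> powr (1/e))" using a bd by simp
    also have "\<dots> = T * \<alpha> powr (Q / (Q - d))" using a by (simp add: p powr_add)
    finally show ?thesis using t1 unfolding c_def e_def by linarith
  qed
qed

lemma ulim_tail:
  fixes g :: "nat \<Rightarrow> 'b \<Rightarrow> 'a::banach"
  assumes sm: "\<And>x. x \<in> S \<Longrightarrow> summable (\<lambda>j. norm (g j x))"
    and tl: "\<And>\<epsilon>. \<epsilon> > 0 \<Longrightarrow> \<exists>N. \<forall>n\<ge>N. \<forall>x\<in>S. (\<Sum>k. norm (g (k + n) x)) < \<epsilon>"
  shows "uniform_limit S (\<lambda>n x. \<Sum>j<n. g j x) (\<lambda>x. \<Sum>j. g j x) sequentially"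
  unfolding uniform_limit_iff
proof (intro allI impI)
  fix \<epsilon> :: real assume "\<epsilon> > 0"
  then obtain N where N: "\<forall>n\<ge>N. \<forall>x\<in>S. (\<Sum>k. norm (g (k + n) x)) < \<epsilon>" using tl by blast
  show "\<forall>\<^sub>F n in sequentially. \<forall>x\<in>S. dist (\<Sum>j<n. g j x) (\<Sum>j. g j x) < \<epsilon>"
    unfolding eventually_sequentially
  proof (rule exI[of _ N], intro allI impI ballI)
    fix n x assume n: "N \<le> n" and x: "x \<in> S"
    have s1: "summable (\<lambda>j. g j x)" by (rule summable_norm_cancel[OF sm[OF x]])
    have s2: "summable (\<lambda>k. norm (g (k + n) x))"
      unfolding summable_iff_shift[of "\<lambda>j. norm (g j x)" n] by (rule sm[OF x])
    have "(\<Sum>j<n. g j x) - (\<Sum>j. g j x) = - (\<Sum>k. g (k + n) x)"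
      using suminf_minus_initial_segment[OF s1, of n] by simp
    hence "dist (\<Sum>j<n. g j x) (\<Sum>j. g j x) = norm (\<Sum>k. g (k + n) x)"
      by (simp only: dist_norm norm_minus_cancel)
    also have "\<dots> \<le> (\<Sum>k. norm (g (k + n) x))" using s2 by (rule summable_norm)
    also have "\<dots> < \<epsilon>" using N n x by blast
    finally show "dist (\<Sum>j<n. g j x) (\<Sum>j. g j x) < \<epsilon>" .
  qed
qed

lemma partial_cont:
  fixes a :: "nat \<Rightarrow> 'a::real_normed_field"
  shows "continuous_on S (\<lambda>x. \<Sum>j<n. a j * x j ^ d)"
proof -
  have "continuous_on S (\<lambda>x::nat\<Rightarrow>'a. x j)" for j
    by (rule continuous_on_subset[OF continuous_on_product_coordinates]) simp
  hence c: "continuous_on S (\<lambda>x::nat\<Rightarrow>'a. a j * x j ^ d)" for j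
    by (rule continuous_on_mult[OF continuous_on_const continuous_on_power])
  show ?thesis by (rule continuous_on_sum) (rule c)
qed

lemma summable_cmp:
  fixes f :: "nat \<Rightarrow> 'a::banach"
  assumes "summable g" "\<And>n. norm (f n) \<le> g n"
  shows "summable f"
  using summable_comparison_test'[of g 0 f] assms by blast

lemma tail_le:
  fixes f :: "nat \<Rightarrow> real"
  assumes "summable f" "\<And>j. f j \<ge> 0"
  shows "(\<Sum>k. f (k + n)) \<le> (\<Sum>j. f j)"
  using suminf_split_initial_segment[OF assms(1), of n] assms(2) by (simp add: sum_nonneg)

lemma main_inf:
  fixes a :: "nat \<Rightarrow> 'a::{real_normed_field,banach}"
  assumes "M > 0" "in_lq (conj_exp d \<infinity>) a"
  shows "Xball \<infinity> M \<subseteq> (Omega M :: (nat\<Rightarrow>'a) set) \<and>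
    continuous_on (Xball \<infinity> M :: (nat\<Rightarrow>'a) set) (\<lambda>x. \<Sum>j. a j * x j ^ d)"
proof -
  have sa: "summable (\<lambda>j. norm (a j))" using assms(2)
    by (simp add: in_lq_def conj_exp_def)
  have xb: "norm (x j) \<le> M" if "x \<in> Xball \<infinity> M" for x :: "nat \<Rightarrow> 'a" and j
  proof -
    have bd: "bounded (range x)" and sp: "(SUP j. norm (x j)) \<le> M"
      using that by (auto simp: Xball_def in_lq_def lq_norm_def)
    have "bdd_above (range (\<lambda>j. norm (x j)))"
      using bd unfolding bounded_iff bdd_above_def by auto
    hence "norm (x j) \<le> (SUP j. norm (x j))" using cSUP_upper[of j UNIV "\<lambda>j. norm (x j)"] by simp
    thus ?thesis using sp by linarith
  qed
  have gle: "norm (a j * x j ^ d) \<le> M ^ d * norm (a j)" if "x \<in> Xball \<infinity> M" for x :: "nat \<Rightarrow> 'a" and j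
  proof -
    have "norm (x j) ^ d \<le> M ^ d" using xb[OF that, of j] by (simp add: power_mono)
    hence "norm (a j) * norm (x j) ^ d \<le> norm (a j) * M ^ d" by (simp add: mult_left_mono)
    thus ?thesis by (simp add: norm_mult norm_power mult.commute)
  qed
  have sb: "summable (\<lambda>j. M ^ d * norm (a j))" using sa by (rule summable_mult)
  have ul: "uniform_limit (Xball \<infinity> M) (\<lambda>n x. \<Sum>j<n. a j * x j ^ d) (\<lambda>x. \<Sum>j. a j * x j ^ d) sequentially"
  proof (rule ulim_tail)
    fix x :: "nat \<Rightarrow> 'a" assume x: "x \<in> Xball \<infinity> M"
    have b: "norm (norm (a j * x j ^ d)) \<le> M ^ d * norm (a j)" for j
      using gle[OF x, of j] by simp
    show "summable (\<lambda>j. norm (a j * x j ^ d))" by (rule summable_cmp[OF sb b])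
  next
    fix \<epsilon> :: real assume "\<epsilon> > 0"
    then obtain N where N: "\<forall>n\<ge>N. norm (\<Sum>i. M ^ d * norm (a (i + n))) < \<epsilon>"
      using suminf_exist_split[OF _ sb] by blast
    show "\<exists>N. \<forall>n\<ge>N. \<forall>x\<in>Xball \<infinity> M. (\<Sum>k. norm (a (k + n) * x (k + n) ^ d)) < \<epsilon>"
    proof (rule exI[of _ N], intro allI impI ballI)
      fix n and x :: "nat \<Rightarrow> 'a" assume n: "N \<le> n" and x: "x \<in> Xball \<infinity> M"
      have s2: "summable (\<lambda>k. M ^ d * norm (a (k + n)))" unfolding summable_iff_shift[of "\<lambda>j. M ^ d * norm (a j)" n] by (rule sb)
      have s1: "summable (\<lambda>k. norm (a (k + n) * x (k + n) ^ d))"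
      proof (rule summable_cmp[OF s2])
        fix k show "norm (norm (a (k + n) * x (k + n) ^ d)) \<le> M ^ d * norm (a (k + n))"
          using gle[OF x, of "k + n"] by simp
      qed
      have "(\<Sum>k. norm (a (k + n) * x (k + n) ^ d)) \<le> (\<Sum>k. M ^ d * norm (a (k + n)))"
        by (rule suminf_le[OF _ s1 s2]) (rule gle[OF x])
      also have "\<dots> \<le> norm (\<Sum>k. M ^ d * norm (a (k + n)))" by simp
      also have "\<dots> < \<epsilon>" using N n by blast
      finally show "(\<Sum>k. norm (a (k + n) * x (k + n) ^ d)) < \<epsilon>" .
    qed
  qed
  have "continuous_on (Xball \<infinity> M) (\<lambda>x::nat\<Rightarrow>'a. \<Sum>j. a j * x j ^ d)"
    by (rule uniform_limit_theorem[OF _ ul]) (intro always_eventually allI partial_cont, simp)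
  moreover have "Xball \<infinity> M \<subseteq> (Omega M :: (nat\<Rightarrow>'a) set)" using xb by (auto simp: Omega_def)
  ultimately show ?thesis by blast
qed

lemma main_fin:
  fixes a :: "nat \<Rightarrow> 'a::{real_normed_field,banach}" and Q :: real
  assumes d0: "d > 0" and Qd: "real d < Q" and M0: "M > 0"
    and al: "in_lq (conj_exp d (ereal Q)) a"
  shows "Xball (ereal Q) M \<subseteq> (Omega M :: (nat\<Rightarrow>'a) set) \<and>
    continuous_on (Xball (ereal Q) M :: (nat\<Rightarrow>'a) set) (\<lambda>x. \<Sum>j. a j * x j ^ d)"
proof -
  define p where "p = Q / (Q - d)"
  define e where "e = (Q - d) / d"
  have e0: "e > 0" using Qd d0 by (simp add: e_def)
  have Q0: "Q > 0" using Qd d0 by linarith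
  let ?X = "Xball (ereal Q) M :: (nat\<Rightarrow>'a) set"
  have sa: "summable (\<lambda>j. norm (a j) powr p)" using al
    by (simp add: in_lq_def conj_exp_def p_def)
  have xs: "summable (\<lambda>j. norm (x j) powr Q)" and xS: "(\<Sum>j. norm (x j) powr Q) \<le> M powr Q"
    if "x \<in> ?X" for x
  proof -
    show s: "summable (\<lambda>j. norm (x j) powr Q)" using that by (simp add: Xball_def in_lq_def)
    have le: "(\<Sum>j. norm (x j) powr Q) powr (1 / Q) \<le> M" using that by (simp add: Xball_def lq_norm_def)
    have nn: "(\<Sum>j. norm (x j) powr Q) \<ge> 0" by (intro suminf_nonneg s) auto
    have "(\<Sum>j. norm (x j) powr Q) = ((\<Sum>j. norm (x j) powr Q) powr (1 / Q)) powr Q"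
      using nn Q0 by (simp add: powr_powr)
    also have "\<dots> \<le> M powr Q" using le Q0 by (intro powr_mono2) auto
    finally show "(\<Sum>j. norm (x j) powr Q) \<le> M powr Q" .
  qed
  have xb: "norm (x j) \<le> M" if "x \<in> ?X" for x j
  proof -
    have "norm (x j) powr Q \<le> (\<Sum>j. norm (x j) powr Q)"
      using sum_le_suminf[OF xs[OF that], of "{j}"] by auto
    also have "\<dots> \<le> M powr Q" by (rule xS[OF that])
    finally have "norm (x j) powr Q \<le> M powr Q" .
    show ?thesis
    proof (rule ccontr)
      assume "\<not> norm (x j) \<le> M"
      hence "M powr Q < norm (x j) powr Q" using Q0 M0 by (intro powr_less_mono2) auto
      thus False using \<open>norm (x j) powr Q \<le> M powr Q\<close> by linarith
    qed
  qed
  have key: "norm (a j * x j ^ d) \<le> T * norm (a j) powr p + T powr (- e) * norm (x j) powr Q"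
    if "T > 0" for T and x :: "nat \<Rightarrow> 'a" and j
    using young_aux[where \<alpha>="norm (a j)" and \<beta>="norm (x j)" and T=T and Q=Q and d=d] that Qd d0
    by (simp add: norm_mult norm_power p_def e_def)
  have ul: "uniform_limit ?X (\<lambda>n x. \<Sum>j<n. a j * x j ^ d) (\<lambda>x. \<Sum>j. a j * x j ^ d) sequentially"
  proof (rule ulim_tail)
    fix x :: "nat \<Rightarrow> 'a" assume x: "x \<in> ?X"
    have sh: "summable (\<lambda>j. norm (a j) powr p + norm (x j) powr Q)"
      by (rule summable_add[OF sa xs[OF x]])
    show "summable (\<lambda>j. norm (a j * x j ^ d))"
    proof (rule summable_cmp[OF sh])
      fix j show "norm (norm (a j * x j ^ d)) \<le> norm (a j) powr p + norm (x j) powr Q"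
        using key[where T=1 and x=x and j=j] by simp
    qed
  next
    fix \<epsilon> :: real assume ep: "\<epsilon> > 0"
    define K where "K = M powr Q"
    have K0: "K \<ge> 0" by (simp add: K_def)
    define c where "c = \<epsilon> / (4 * (K + 1))"
    have c0: "c > 0" unfolding c_def using ep K0 by (intro divide_pos_pos) auto
    define T where "T = c powr (- 1 / e)"
    have T0: "T > 0" using c0 by (simp add: T_def)
    have Tc: "T powr (- e) = c" using c0 e0 by (simp add: T_def powr_powr)
    have cM: "c * M powr Q < \<epsilon> / 2"
    proof -
      have "c * K \<le> c * (K + 1)" using c0 by simp
      also have "c * (K + 1) = \<epsilon> / 4" unfolding c_def using K0 by (simp add: field_simps)
      finally show ?thesis using ep unfolding K_def by linarith
    qed
    obtain N where N: "\<forall>n\<ge>N. norm (\<Sum>i. norm (a (i + n)) powr p) < \<epsilon> / (2 * T)"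
      using suminf_exist_split[OF _ sa, of "\<epsilon> / (2 * T)"] ep T0 by auto
    show "\<exists>N. \<forall>n\<ge>N. \<forall>x\<in>?X. (\<Sum>k. norm (a (k + n) * x (k + n) ^ d)) < \<epsilon>"
    proof (rule exI[of _ N], intro allI impI ballI)
      fix n and x :: "nat \<Rightarrow> 'a" assume n: "N \<le> n" and x: "x \<in> ?X"
      have sA: "summable (\<lambda>k. norm (a (k + n)) powr p)" unfolding summable_iff_shift[of "\<lambda>j. norm (a j) powr p" n] by (rule sa)
      have sB: "summable (\<lambda>k. norm (x (k + n)) powr Q)" unfolding summable_iff_shift[of "\<lambda>j. norm (x j) powr Q" n] by (rule xs[OF x])
      have s2: "summable (\<lambda>k. T * norm (a (k + n)) powr p + c * norm (x (k + n)) powr Q)"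
        by (rule summable_add[OF summable_mult[OF sA] summable_mult[OF sB]])
      have kk: "norm (a (k + n) * x (k + n) ^ d) \<le> T * norm (a (k + n)) powr p + c * norm (x (k + n)) powr Q" for k
        using key[OF T0, where x=x and j="k + n"] unfolding Tc .
      have s1: "summable (\<lambda>k. norm (a (k + n) * x (k + n) ^ d))"
      proof (rule summable_cmp[OF s2])
        fix k show "norm (norm (a (k + n) * x (k + n) ^ d)) \<le> T * norm (a (k + n)) powr p + c * norm (x (k + n)) powr Q"
          using kk[of k] by simp
      qed
      have "(\<Sum>k. norm (a (k + n) * x (k + n) ^ d)) \<le> (\<Sum>k. T * norm (a (k + n)) powr p + c * norm (x (k + n)) powr Q)"
        by (rule suminf_le[OF kk s1 s2])
      also have "\<dots> = (\<Sum>k. T * norm (a (k + n)) powr p) + (\<Sum>k. c * norm (x (k + n)) powr Q)"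
        by (rule suminf_add[OF summable_mult[OF sA] summable_mult[OF sB], symmetric])
      also have "\<dots> = T * (\<Sum>k. norm (a (k + n)) powr p) + c * (\<Sum>k. norm (x (k + n)) powr Q)"
        by (simp only: suminf_mult[OF sA] suminf_mult[OF sB])
      also have "\<dots> \<le> T * (\<Sum>k. norm (a (k + n)) powr p) + c * M powr Q"
      proof -
        have "(\<Sum>k. norm (x (k + n)) powr Q) \<le> (\<Sum>j. norm (x j) powr Q)"
          by (rule tail_le[OF xs[OF x]]) auto
        also have "\<dots> \<le> M powr Q" by (rule xS[OF x])
        finally have "(\<Sum>k. norm (x (k + n)) powr Q) \<le> M powr Q" .
        from mult_left_mono[OF this, of c] c0
        show ?thesis by linarith
      qed
      also have "\<dots> < \<epsilon>"
      proof -
        have "(\<Sum>k. norm (a (k + n)) powr p) \<le> norm (\<Sum>k. norm (a (k + n)) powr p)" by simp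
        also have "\<dots> < \<epsilon> / (2 * T)" using N n by blast
        finally have A: "(\<Sum>k. norm (a (k + n)) powr p) < \<epsilon> / (2 * T)" .
        have "T * (\<Sum>k. norm (a (k + n)) powr p) < T * (\<epsilon> / (2 * T))"
          by (rule mult_strict_left_mono[OF A T0])
        also have "T * (\<epsilon> / (2 * T)) = \<epsilon> / 2" using T0 by simp
        finally have "T * (\<Sum>k. norm (a (k + n)) powr p) < \<epsilon> / 2" .
        thus ?thesis using cM by linarith
      qed
      finally show "(\<Sum>k. norm (a (k + n) * x (k + n) ^ d)) < \<epsilon>" .
    qed
  qed
  have "continuous_on ?X (\<lambda>x::nat\<Rightarrow>'a. \<Sum>j. a j * x j ^ d)"
    by (rule uniform_limit_theorem[OF _ ul]) (intro always_eventually allI partial_cont, simp)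
  moreover have "?X \<subseteq> (Omega M :: (nat\<Rightarrow>'a) set)" using xb by (auto simp: Omega_def)
  ultimately show ?thesis by blast
qed

lemma xball_sub:
  fixes q :: ereal
  assumes q0: "ereal 0 < q" and M0: "M > 0"
  shows "Xball q M \<subseteq> (Omega M :: (nat \<Rightarrow> 'a::real_normed_vector) set)"
proof
  fix x :: "nat \<Rightarrow> 'a" assume xX: "x \<in> Xball q M"
  show "x \<in> Omega M" unfolding Omega_def
  proof (intro CollectI allI)
    fix j
    show "norm (x j) \<le> M"
    proof (cases q)
      case PInf
      have bd: "bounded (range x)" and sp: "(SUP j. norm (x j)) \<le> M"
        using xX PInf by (auto simp: Xball_def in_lq_def lq_norm_def)
      have "bdd_above (range (\<lambda>j. norm (x j)))"
        using bd unfolding bounded_iff bdd_above_def by auto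
      hence "norm (x j) \<le> (SUP j. norm (x j))" using cSUP_upper[of j UNIV "\<lambda>j. norm (x j)"] by simp
      thus ?thesis using sp by linarith
    next
      case MInf
      then show ?thesis using q0 by simp
    next
      case (real Q)
      have Q0: "Q > 0" using q0 real by simp
      have s: "summable (\<lambda>j. norm (x j) powr Q)" using xX real by (simp add: Xball_def in_lq_def)
      have le: "(\<Sum>j. norm (x j) powr Q) powr (1 / Q) \<le> M" using xX real by (simp add: Xball_def lq_norm_def)
      have nn: "(\<Sum>j. norm (x j) powr Q) \<ge> 0" by (intro suminf_nonneg s) auto
      have "norm (x j) powr Q \<le> (\<Sum>j. norm (x j) powr Q)"
        using sum_le_suminf[OF s, of "{j}"] by auto
      also have "\<dots> = ((\<Sum>j. norm (x j) powr Q) powr (1 / Q)) powr Q"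
        using nn Q0 by (simp add: powr_powr)
      also have "\<dots> \<le> M powr Q" using le Q0 nn by (intro powr_mono2) auto
      finally have le2: "norm (x j) powr Q \<le> M powr Q" .
      show ?thesis
      proof (rule ccontr)
        assume "\<not> norm (x j) \<le> M"
        hence "M powr Q < norm (x j) powr Q" using Q0 M0 by (intro powr_less_mono2) auto
        thus False using le2 by linarith
      qed
    qed
  qed
qed

theorem lemma2:
  fixes d :: nat and q :: ereal and M :: real
    and a :: "nat \<Rightarrow> real" and b :: "nat \<Rightarrow> complex"
  assumes "d > 0" and "ereal (real d) < q" and "M > 0"
    and "in_lq (conj_exp d q) a" and "in_lq (conj_exp d q) b"
  shows "Xball q M \<subseteq> Omega M \<and>
         continuous_on (Xball q M :: (nat \<Rightarrow> real) set) (\<lambda>x. \<Sum>j. a j * x j ^ d) \<and>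
         Xball q M \<subseteq> Omega M \<and>
         continuous_on (Xball q M :: (nat \<Rightarrow> complex) set) (\<lambda>x. \<Sum>j. b j * x j ^ d)"
proof -
  have q0: "ereal 0 < q"
  proof -
    have "ereal 0 < ereal (real d)" using assms(1) by simp
    thus ?thesis using assms(2) by (rule less_trans)
  qed
  have sub1: "Xball q M \<subseteq> (Omega M :: (nat \<Rightarrow> 'a::real_normed_vector) set)"
    by (rule xball_sub[OF q0 assms(3)])
  have sub2: "Xball q M \<subseteq> (Omega M :: (nat \<Rightarrow> 'b::real_normed_vector) set)"
    by (rule xball_sub[OF q0 assms(3)])
  have cont: "continuous_on (Xball q M :: (nat \<Rightarrow> real) set) (\<lambda>x. \<Sum>j. a j * x j ^ d) \<and>
         continuous_on (Xball q M :: (nat \<Rightarrow> complex) set) (\<lambda>x. \<Sum>j. b j * x j ^ d)"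
  proof (cases q)
    case (real Q)
    have Qd: "real d < Q" using assms(2) real by simp
    have a4: "in_lq (conj_exp d (ereal Q)) a" using assms(4) real by simp
    have b4: "in_lq (conj_exp d (ereal Q)) b" using assms(5) real by simp
    show ?thesis unfolding real
      using main_fin[OF assms(1) Qd assms(3) a4] main_fin[OF assms(1) Qd assms(3) b4] by blast
  next
    case PInf
    have a4: "in_lq (conj_exp d \<infinity>) a" using assms(4) PInf by simp
    have b4: "in_lq (conj_exp d \<infinity>) b" using assms(5) PInf by simp
    show ?thesis unfolding PInf
      using main_inf[OF assms(3) a4] main_inf[OF assms(3) b4] by blast
  next
    case MInf
    then show ?thesis using q0 by simp
  qed
  show ?thesis using sub1 sub2 cont by blast
qed

end
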